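(* Let $p$ be a prime and $n$ a positive integer. Then $n\in\mathcal{M}_p^{(1)}\cup\mathcal{M}_p^{(2)}$ if and only if $p\mid n$, $n/p\in\mathcal{W}$ and $p\in\mathfrak{M}_{n/p}$.
   Context: For positive integers $k,n$ let $S_k(n)=\sum_{i=1}^{n} i^k$. For an integer $a$, $\mathcal{M}_a$ denotes the set of positive integers $n$ such that $S_n(n)\equiv a\pmod{n}$. For a prime $p$: $\mathcal{M}_p^{(1)}=\{n\in\mathcal{M}_p : p\mid n,\ p^2\nmid n\}$ and $\mathcal{M}_p^{(2)}=\{n\in\mathcal{M}_p : p^2\mid n,\ p^3\nmid n\}$. A positive integer $n$ is a weak primary pseudoperfect number if $\sum_{q\mid n,\ q\text{ prime}} \frac{n}{q}+1\equiv 0\pmod{n}$; $\mathcal{W}$ denotes the set of such numbers. For a positive integer $Q$, $\mathfrak{M}_Q=\{m\in\mathbb{N} : S_{Qm}(Qm)\equiv m\pmod{Qm}\}$. *)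

theory Defs
  imports "HOL-Number_Theory.Number_Theory"
begin

definition S :: "nat \<Rightarrow> nat \<Rightarrow> int" where
  "S k n = (\<Sum>i=1..n. (int i) ^ k)"

definition M :: "int \<Rightarrow> nat set" where
  "M a = {n. n > 0 \<and> [S n n = a] (mod int n)}"

definition M1 :: "nat \<Rightarrow> nat set" where
  "M1 p = {n \<in> M (int p). p dvd n \<and> \<not> p^2 dvd n}"

definition M2 :: "nat \<Rightarrow> nat set" where
  "M2 p = {n \<in> M (int p). p^2 dvd n \<and> \<not> p^3 dvd n}"

definition W :: "nat set" where
  "W = {n. n > 0 \<and> [(\<Sum>q\<in>prime_factors n. n div q) + 1 = 0] (mod n)}"

definition frakM :: "nat \<Rightarrow> nat set" where
  "frakM Q = {m. m > 0 \<and> [S (Q*m) (Q*m) = int m] (mod int (Q*m))}"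

end

theory Submission
  imports Defs
begin


lemma sum_pow_period:
  fixes d c k :: nat
  shows "[(\<Sum>i=1..c*d. (int i)^k) = int c * (\<Sum>i=1..d. (int i)^k)] (mod int d)"
proof (induction c)
  case 0
  then show ?case by simp
next
  case (Suc c)
  have split: "(\<Sum>i=1..Suc c*d. (int i)^k) = (\<Sum>i=1..c*d. (int i)^k) + (\<Sum>i=c*d+1..c*d+d. (int i)^k)"
    using sum.ub_add_nat[of 1 "c*d" "\<lambda>i. (int i)^k" d] by (simp add: add.commute)
  have sh: "(\<Sum>i=c*d+1..c*d+d. (int i)^k) = (\<Sum>j=1..d. (int (j + c*d))^k)"
    using sum.shift_bounds_cl_nat_ivl[of "\<lambda>i. (int i)^k" 1 "c*d" d] by (simp add: add.commute)
  have "[(\<Sum>j=1..d. (int (j + c*d))^k) = (\<Sum>j=1..d. (int j)^k)] (mod int d)"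
  proof (rule cong_sum)
    fix j assume "j \<in> {1..d}"
    have "[int (j + c*d) = int j] (mod int d)"
      by (simp add: cong_iff_dvd_diff)
    then show "[(int (j + c*d))^k = (int j)^k] (mod int d)" by (rule cong_pow)
  qed
  then have "[(\<Sum>i=1..Suc c*d. (int i)^k) = int c * (\<Sum>i=1..d. (int i)^k) + (\<Sum>j=1..d. (int j)^k)] (mod int d)"
    unfolding split sh using Suc.IH by (intro cong_add) auto
  then show ?case by (simp add: algebra_simps)
qed



lemma sum_pow_units:
  fixes q e k :: nat
  assumes q: "prime q" and e: "e > 0" and tk: "totient (q^e) dvd k" and ek: "e \<le> k"
  shows "[(\<Sum>i=1..q^e. (int i)^k) = int (totient (q^e))] (mod int (q^e))"
proof -
  have "[(\<Sum>i=1..q^e. (int i)^k) = (\<Sum>i=1..q^e. (if coprime i q then 1 else 0 :: int))] (mod int (q^e))"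
  proof (rule cong_sum)
    fix i assume "i \<in> {1..q^e}"
    show "[(int i)^k = (if coprime i q then 1 else 0)] (mod int (q^e))"
    proof (cases "coprime i q")
      case True
      then have "coprime i (q^e)" by simp
      then have "[i ^ totient (q^e) = 1] (mod q^e)" by (rule euler_theorem)
      then have "[(i ^ totient (q^e)) ^ (k div totient (q^e)) = 1 ^ (k div totient (q^e))] (mod q^e)"
        by (rule cong_pow)
      moreover have "(i ^ totient (q^e)) ^ (k div totient (q^e)) = i ^ k"
        using tk by (simp add: power_mult[symmetric])
      ultimately have "[i ^ k = 1] (mod q^e)" by simp
      then have "[int (i ^ k) = int 1] (mod int (q^e))" using cong_int_iff by blast
      then show ?thesis using True by simp
    next
      case False
      then have "q dvd i" using q by (meson coprime_commute prime_imp_coprime)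
      then have "q^e dvd i^e" by (rule dvd_power_same)
      also have "i^e dvd i^k" using ek by (rule le_imp_power_dvd)
      finally have "int (q^e) dvd (int i)^k" by (metis of_nat_dvd_iff of_nat_power)
      then show ?thesis using False by (simp add: cong_0_iff)
    qed
  qed
  also have "(\<Sum>i=1..q^e. (if coprime i q then 1 else 0 :: int)) = int (card {i\<in>{1..q^e}. coprime i q})"
    by (simp add: sum.If_cases Int_def conj_commute)
  also have "{i\<in>{1..q^e}. coprime i q} = totatives (q^e)"
    using e by (auto simp: totatives_def)
  finally show ?thesis by (simp add: totient_def)
qed

lemma bij_mult_mod:
  fixes g d :: nat
  assumes "d > 0" "coprime g d"
  shows "bij_betw (\<lambda>i. (g*i) mod d) {..<d} {..<d}"
proof -
  have inj: "inj_on (\<lambda>i. (g*i) mod d) {..<d}"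
  proof (rule inj_onI)
    fix i j assume i: "i \<in> {..<d}" and j: "j \<in> {..<d}" and eq: "(g*i) mod d = (g*j) mod d"
    then have "[g*i = g*j] (mod d)" by (simp add: cong_def)
    then have "[i = j] (mod d)" using assms(2) cong_mult_lcancel_nat[of g d i j] by simp
    then show "i = j" using i j by (simp add: cong_def)
  qed
  have sub: "(\<lambda>i. (g*i) mod d) ` {..<d} \<subseteq> {..<d}" using assms(1) by auto
  have "card ((\<lambda>i. (g*i) mod d) ` {..<d}) = card {..<d}" using inj by (simp add: card_image)
  then have "(\<lambda>i. (g*i) mod d) ` {..<d} = {..<d}" using sub by (simp add: card_subset_eq)
  then show ?thesis using inj by (simp add: bij_betw_def)
qed

lemma sum_pow_zero:
  fixes g d k :: nat
  assumes d: "d > 0" and k: "k > 0" and g: "coprime g d" and c: "coprime ((int g)^k - 1) (int d)"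
  shows "int d dvd (\<Sum>i=1..d. (int i)^k)"
proof -
  define T where "T = (\<Sum>i<d. (int i)^k)"
  have e1: "(\<Sum>i=1..d. (int i)^k) = T + (int d)^k"
  proof -
    have "(\<Sum>i=1..d. (int i)^k) = (\<Sum>i<d. (int (Suc i))^k)"
      by (rule sum.reindex_bij_witness[of _ "\<lambda>i. i + 1" "\<lambda>i. i - 1"]) auto
    also have "\<dots> + (int 0)^k = (\<Sum>i<Suc d. (int i)^k)"
      by (subst sum.lessThan_Suc_shift) simp
    also have "\<dots> = T + (int d)^k" by (simp add: T_def)
    finally show ?thesis using k by (simp add: zero_power)
  qed
  have "(\<Sum>i<d. (int ((g*i) mod d))^k) = T"
    unfolding T_def using sum.reindex_bij_betw[OF bij_mult_mod[OF d g], of "\<lambda>i. (int i)^k"] by simp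
  moreover have "[(\<Sum>i<d. (int ((g*i) mod d))^k) = (\<Sum>i<d. (int g)^k * (int i)^k)] (mod int d)"
  proof (rule cong_sum)
    fix i assume "i \<in> {..<d}"
    have "[int ((g*i) mod d) = int g * int i] (mod int d)"
      by (metis cong_int_iff cong_mod_left cong_refl of_nat_mult)
    then show "[(int ((g*i) mod d))^k = (int g)^k * (int i)^k] (mod int d)"
      using cong_pow by (metis power_mult_distrib)
  qed
  ultimately have "[T = (int g)^k * T] (mod int d)" by (simp add: sum_distrib_left T_def)
  then have "int d dvd ((int g)^k - 1) * T"
    by (simp add: cong_iff_dvd_diff algebra_simps dvd_diff_commute)
  then have "int d dvd T" using c by (metis coprime_commute coprime_dvd_mult_right_iff)
  moreover have "int d dvd (int d)^k" using k by simp
  ultimately show ?thesis using e1 by simp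
qed

lemma exists_nonroot:
  fixes q k :: nat
  assumes q: "prime q" and nd: "\<not> (q - 1) dvd k"
  shows "\<exists>g. coprime g q \<and> \<not> q dvd (int g ^ k - 1)"
proof -
  obtain g where g: "residue_primroot q g" using prime_primitive_root_exists[of q] q prime_gt_1_nat by blast
  then have cop: "coprime g q" and o: "ord q g = q - 1"
    using q by (auto simp: residue_primroot_def totient_prime coprime_commute)
  have "\<not> [g ^ k = 1] (mod q)" using o nd ord_divides by simp
  then have "\<not> [int g ^ k = 1] (mod int q)" using cong_int_iff by (metis of_nat_1 of_nat_power)
  then have "\<not> int q dvd (int g ^ k - 1)" by (simp add: cong_iff_dvd_diff)
  then show ?thesis using cop by blast
qed



lemma fin_step:
  fixes q x :: nat
  assumes "int q dvd int x * (int q - 1) - 1"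
  shows "int q dvd int x + 1"
proof -
  have "int x * (int q - 1) - 1 = int q * int x - (int x + 1)" by (simp add: algebra_simps)
  with assms have "int q dvd int q * int x - (int x + 1)" by simp
  then have "int q dvd int q * int x - (int q * int x - (int x + 1))" using dvd_diff[OF dvd_triv_left] by blast
  moreover have "int q * int x - (int q * int x - (int x + 1)) = int x + 1" by simp
  ultimately show ?thesis by metis
qed

lemma key_p3:
  fixes p n :: nat
  assumes p: "prime p" and n: "n > 0" and pn: "p dvd n" and hS: "[S n n = int p] (mod int n)"
  shows "\<not> p^3 dvd n"
proof
  assume p3: "p^3 dvd n"
  have p2: "p^2 dvd n" using p3 le_imp_power_dvd[of 2 3 p] dvd_trans by fastforce
  have hS2: "[S n n = int p] (mod int (p^2))"
    using hS p2 by (metis cong_dvd_modulus of_nat_dvd_iff)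
  define T where "T = (\<Sum>i=1..p^2. (int i)^n)"
  have nd: "n = (n div p^2) * p^2" using p2 by simp
  have A: "[S n n = int (n div p^2) * T] (mod int (p^2))"
    unfolding S_def T_def using sum_pow_period[where d="p^2" and c="n div p^2" and k=n] nd[symmetric] by simp
  have "[T = int p * (\<Sum>i=1..p. (int i)^n)] (mod int p)"
    unfolding T_def using sum_pow_period[where d=p and c=p and k=n] by (simp add: power2_eq_square)
  then have pT: "int p dvd T" by (metis cong_dvd_iff dvd_triv_left)
  obtain r where r: "n = p^3 * r" using p3 by blast
  have "n div p^2 = p * r" using r p by (simp add: power_numeral_reduce power2_eq_square prime_gt_0_nat)
  then have "int (p^2) dvd int (n div p^2) * T" using pT
    by (simp add: power2_eq_square mult_dvd_mono mult.assoc)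
  then have "[S n n = 0] (mod int (p^2))" using A by (metis cong_0_iff cong_dvd_iff)
  then have "int (p^2) dvd int p" using hS2 by (metis cong_0_iff cong_dvd_iff cong_sym)
  then have "p^2 dvd p" by (simp only: of_nat_dvd_iff)
  then have "p^2 \<le> p" using p dvd_imp_le prime_gt_0_nat by blast
  moreover have "p < p^2" using prime_gt_1_nat[OF p] by (simp add: power2_eq_square)
  ultimately show False by simp
qed



lemma key_q:
  fixes p n q :: nat
  assumes p: "prime p" and n: "n > 0" and pn: "p dvd n" and hS: "[S n n = int p] (mod int n)"
    and q: "prime q" and qm: "q dvd n div p"
  shows "\<not> q^2 dvd n div p \<and> int q dvd int (n div p div q) + 1"
proof -
  define m where "m = n div p"
  have nm: "n = p * m" using pn m_def by simp
  have qm': "q dvd m" using qm m_def by simp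
  have q1: "q > 1" using q prime_gt_1_nat by blast
  have p1: "p > 1" using p prime_gt_1_nat by blast
  have m0: "m > 0" using n nm by (cases m) auto
  show ?thesis
  proof (cases "q = p")
    case False
    have qn: "q dvd n" using qm' nm by simp
    have hSq: "[S n n = int p] (mod int q)"
      using hS qn by (metis cong_dvd_modulus of_nat_dvd_iff)
    define Tq where "Tq = (\<Sum>i=1..q. (int i)^n)"
    have nd: "n div q * q = n" using qn by simp
    have A: "[S n n = int (n div q) * Tq] (mod int q)"
      unfolding S_def Tq_def using sum_pow_period[where d=q and c="n div q" and k=n] nd by simp
    have qnp: "\<not> int q dvd int p"
    proof
      assume "int q dvd int p"
      then have "q dvd p" by simp
      then show False using False p q by (simp add: primes_dvd_imp_eq)
    qed
    have contra: "\<not> int q dvd S n n"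
    proof
      assume "int q dvd S n n"
      then have "[S n n = 0] (mod int q)" by (simp add: cong_0_iff)
      then have "[int p = 0] (mod int q)" using hSq by (metis cong_sym cong_trans)
      then show False using qnp by (simp add: cong_0_iff)
    qed
    have sq: "\<not> q^2 dvd m"
    proof
      assume "q^2 dvd m"
      then have "q^2 dvd n" using nm by simp
      then obtain r where r: "n = q^2 * r" by blast
      then have "n div q = q * r" using q1 by (simp add: power2_eq_square)
      then have "int q dvd int (n div q) * Tq" by simp
      then have "int q dvd S n n" using A by (metis cong_dvd_iff cong_sym)
      then show False using contra by simp
    qed
    have dv: "(q - 1) dvd n"
    proof (rule ccontr)
      assume nd1: "\<not> (q - 1) dvd n"
      obtain g where g: "coprime g q" "\<not> int q dvd (int g ^ n - 1)"
        using exists_nonroot[OF q nd1] by blast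
      have "prime (int q)" using q by simp
      then have "coprime (int g ^ n - 1) (int q)"
        using g(2) by (metis coprime_commute prime_imp_coprime)
      then have "int q dvd Tq" unfolding Tq_def using sum_pow_zero[of q n g] g(1) q1 n by simp
      then have "int q dvd int (n div q) * Tq" by simp
      then have "int q dvd S n n" using A by (metis cong_dvd_iff cong_sym)
      then show False using contra by simp
    qed
    have U: "[Tq = int (totient (q^1))] (mod int (q^1))"
      unfolding Tq_def using sum_pow_units[of q 1 n] q dv n by (simp add: totient_prime)
    have tq: "int (totient q) = int q - 1" using q totient_prime q1 by (simp add: of_nat_diff)
    have U': "[Tq = int q - 1] (mod int q)" using U tq by simp
    have "[int (n div q) * Tq = int (n div q) * (int q - 1)] (mod int q)"
      by (rule cong_mult[OF cong_refl U'])
    then have "[S n n = int (n div q) * (int q - 1)] (mod int q)"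
      using A by (rule cong_trans[rotated])
    then have "[int p = int (n div q) * (int q - 1)] (mod int q)"
      using hSq by (meson cong_sym cong_trans)
    moreover have "n div q = p * (m div q)" using nm qm' by (simp add: div_mult_swap)
    ultimately have "[int p * 1 = int p * (int (m div q) * (int q - 1))] (mod int q)"
      by (simp add: mult.assoc)
    moreover have "coprime (int p) (int q)"
    proof -
      have "prime (int q)" using q by simp
      then show ?thesis using qnp by (metis coprime_commute prime_imp_coprime)
    qed
    ultimately have "[1 = int (m div q) * (int q - 1)] (mod int q)"
      using cong_mult_lcancel by blast
    then have "int q dvd int (m div q) * (int q - 1) - 1" by (simp add: cong_iff_dvd_diff dvd_diff_commute)
    then have "int q dvd int (m div q) + 1" by (rule fin_step)
    then show ?thesis using sq m_def by simp
  next
    case True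
    then have pm: "p dvd m" using qm' by simp
    then have p2: "p^2 dvd n" using nm by (simp add: power2_eq_square)
    have np3: "\<not> p^3 dvd n" using key_p3[OF p n pn hS] .
    have sq: "\<not> p^2 dvd m"
    proof
      assume "p^2 dvd m"
      then have "p * p^2 dvd p * m" by (rule mult_dvd_mono[OF dvd_refl])
      then show False using np3 nm by (simp add: power_numeral_reduce power2_eq_square mult.assoc)
    qed
    have hS2: "[S n n = int p] (mod int (p^2))"
      using hS p2 by (metis cong_dvd_modulus of_nat_dvd_iff)
    define T where "T = (\<Sum>i=1..p^2. (int i)^n)"
    have nd: "n div p^2 * p^2 = n" using p2 by simp
    have A: "[S n n = int (n div p^2) * T] (mod int (p^2))"
      unfolding S_def T_def using sum_pow_period[where d="p^2" and c="n div p^2" and k=n] nd by simp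
    have contra: "\<not> int (p^2) dvd S n n"
    proof
      assume "int (p^2) dvd S n n"
      then have "[S n n = 0] (mod int (p^2))" by (simp add: cong_0_iff)
      then have "[int p = 0] (mod int (p^2))" using hS2 by (metis cong_sym cong_trans)
      then have "p^2 dvd p" by (simp add: cong_0_iff del: of_nat_power)
      then have "p^2 \<le> p" using p dvd_imp_le prime_gt_0_nat by blast
      moreover have "p < p^2" using p1 by (simp add: power2_eq_square)
      ultimately show False by simp
    qed
    have dv: "(p - 1) dvd n"
    proof (rule ccontr)
      assume nd1: "\<not> (p - 1) dvd n"
      obtain g where g: "coprime g p" "\<not> int p dvd (int g ^ n - 1)"
        using exists_nonroot[OF p nd1] by blast
      have "prime (int p)" using p by simp
      then have "coprime (int g ^ n - 1) (int p)"
        using g(2) by (metis coprime_commute prime_imp_coprime)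
      then have c2: "coprime (int g ^ n - 1) (int (p^2))" by simp
      have "coprime g (p^2)" using g(1) by simp
      then have "int (p^2) dvd T" unfolding T_def using sum_pow_zero[of "p^2" n g] c2 p1 n by simp
      then have "int (p^2) dvd int (n div p^2) * T" by simp
      then have "int (p^2) dvd S n n" using A by (metis cong_dvd_iff cong_sym)
      then show False using contra by simp
    qed
    have tot: "totient (p^2) = p * (p - 1)" using totient_prime_power[of p 2] p by simp
    have "coprime p (p - 1)" using p1
      using coprime_diff_one_right_nat[of p] by simp
    then have "p * (p - 1) dvd n" using pn dv by (simp add: divides_mult)
    moreover have "2 \<le> n"
    proof -
      have "p^2 \<le> n" using p2 n by (simp add: dvd_imp_le)
      moreover have "p \<le> p^2" using p1 by (simp add: power2_eq_square)
      ultimately show ?thesis using p1 by linarith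
    qed
    ultimately have U: "[T = int (p * (p - 1))] (mod int (p^2))"
      unfolding T_def using sum_pow_units[of p 2 n] p tot by simp
    have "[int (n div p^2) * T = int (n div p^2) * int (p * (p - 1))] (mod int (p^2))"
      by (rule cong_mult[OF cong_refl U])
    then have "[S n n = int (n div p^2) * int (p * (p - 1))] (mod int (p^2))"
      using A by (rule cong_trans[rotated])
    then have "[int p = int (n div p^2) * int (p * (p - 1))] (mod int (p^2))"
      using hS2 by (meson cong_sym cong_trans)
    moreover have "n div p^2 = m div p" using nm by (simp add: power2_eq_square div_mult2_eq p1)
    ultimately have "int (p^2) dvd int (m div p) * int (p * (p - 1)) - int p"
      by (simp add: cong_iff_dvd_diff dvd_diff_commute)
    moreover have "int (m div p) * int (p * (p - 1)) - int p = int p * (int (m div p) * (int p - 1) - 1)"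
      using p1 by (simp add: of_nat_diff algebra_simps)
    moreover have "int (p^2) = int p * int p" by (simp add: power2_eq_square)
    ultimately have "int p * int p dvd int p * (int (m div p) * (int p - 1) - 1)" by simp
    then have "int p dvd int (m div p) * (int p - 1) - 1" using p1 by simp
    then have "int p dvd int (m div p) + 1" by (rule fin_step)
    then show ?thesis using sq m_def True by simp
  qed
qed



lemma W_intro:
  fixes m :: nat
  assumes m: "m > 0"
    and h: "\<And>q. prime q \<Longrightarrow> q dvd m \<Longrightarrow> \<not> q^2 dvd m \<and> int q dvd int (m div q) + 1"
  shows "m \<in> W"
proof -
  define X where "X = (\<Sum>q\<in>prime_factors m. m div q) + 1"
  have X0: "X \<noteq> 0" by (simp add: X_def)
  have "m dvd X"
  proof (rule multiplicity_le_imp_dvd)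
    show "m \<noteq> 0" using m by simp
  next
    fix r :: nat assume r: "prime r"
    show "multiplicity r m \<le> multiplicity r X"
    proof (cases "r dvd m")
      case False
      then show ?thesis by (simp add: not_dvd_imp_multiplicity_0)
    next
      case True
      from h[OF r True] have sq: "\<not> r^2 dvd m" and d1: "int r dvd int (m div r) + 1" by auto
      have "multiplicity r m = 1"
        using True sq by (intro multiplicity_eqI) (auto simp: power2_eq_square)
      moreover have "r dvd X"
      proof -
        have rin: "r \<in> prime_factors m" using r True m by (auto simp: in_prime_factors_iff)
        have "X = (m div r + 1) + (\<Sum>s\<in>prime_factors m - {r}. m div s)"
          unfolding X_def using sum.remove[OF finite_set_mset rin, of "\<lambda>q. m div q"] by simp
        moreover have "r dvd m div r + 1"
          using d1 by (metis of_nat_1 of_nat_add of_nat_dvd_iff)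
        moreover have "r dvd (\<Sum>s\<in>prime_factors m - {r}. m div s)"
        proof (rule dvd_sum)
          fix s assume s: "s \<in> prime_factors m - {r}"
          then have sp: "prime s" and sm: "s dvd m" and sr: "s \<noteq> r"
            by (auto simp: in_prime_factors_iff)
          have "m = s * (m div s)" using sm by simp
          then have "r dvd s * (m div s)" using True by metis
          moreover have "\<not> r dvd s" using sp r sr primes_dvd_imp_eq by blast
          ultimately show "r dvd m div s" using r prime_dvd_mult_iff by blast
        qed
        ultimately show ?thesis by (metis dvd_add)
      qed
      then have "multiplicity r X \<ge> 1" using X0 r by (intro multiplicity_geI) auto
      ultimately show ?thesis by simp
    qed
  qed
  then show ?thesis using m by (simp add: W_def X_def cong_0_iff)
qed



theorem mainTheorem14:
  fixes p n :: nat
  assumes "prime p" and "n > 0"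
  shows "n \<in> M1 p \<union> M2 p \<longleftrightarrow> p dvd n \<and> n div p \<in> W \<and> p \<in> frakM (n div p)"
proof -
  have p: "prime p" and n: "n > 0" using assms by auto
  have p0: "p > 0" using p prime_gt_0_nat by blast
  have hM: "n \<in> M (int p) \<longleftrightarrow> [S n n = int p] (mod int n)" using n by (simp add: M_def)
  have frak: "p \<in> frakM (n div p) \<longleftrightarrow> [S n n = int p] (mod int n)" if pn: "p dvd n"
  proof -
    have e: "n div p * p = n" using pn by simp
    have "int (n div p) * int p = int n" using e by (metis of_nat_mult)
    then show ?thesis using p0 e by (simp add: frakM_def)
  qed
  have Wpart: "n div p \<in> W" if pn: "p dvd n" and hS: "[S n n = int p] (mod int n)"
  proof (rule W_intro)
    show "n div p > 0" using pn n p0 by (metis dvd_div_eq_0_iff gr0I less_not_refl2)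
  next
    fix q assume "prime q" "q dvd n div p"
    then show "\<not> q^2 dvd n div p \<and> int q dvd int (n div p div q) + 1"
      using key_q[OF p n pn hS] by blast
  qed
  show ?thesis
  proof
    assume "n \<in> M1 p \<union> M2 p"
    then have pn: "p dvd n" and hS: "[S n n = int p] (mod int n)"
      unfolding M1_def M2_def using hM by (auto intro: dvd_trans[OF dvd_power[of 2 p]])
    show "p dvd n \<and> n div p \<in> W \<and> p \<in> frakM (n div p)"
      using pn Wpart[OF pn hS] frak[OF pn] hS by simp
  next
    assume "p dvd n \<and> n div p \<in> W \<and> p \<in> frakM (n div p)"
    then have pn: "p dvd n" and hS: "[S n n = int p] (mod int n)" using frak by auto
    have np3: "\<not> p^3 dvd n" using key_p3[OF p n pn hS] .
    show "n \<in> M1 p \<union> M2 p"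
      using pn np3 hS hM unfolding M1_def M2_def by auto
  qed
qed

end
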